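(* Under the hypotheses of the following setting: $f:\mathbb{R}\to(0,+\infty)$ Lipschitz continuous and continuously differentiable with $f>0$, $f'\le0$, $\lim_{x\to+\infty}f(x)=0$; $r>0$; $A:(-\infty,r)\to\mathbb{R}$ continuous; and $\tau:[0,r)\to[0,\infty)$ a $C^1$ solution of $\tau'(t)=1-\frac{f(A(t))}{f(A(t-\tau(t)))}$ for $t\in[0,r)$ with $\tau(0)=\tau_0\ge0$. Then: if $\tau_0>0$, then $\tau(t)>0$ for all $t\in[0,r)$; and if $\tau_0=0$, then $\tau(t)=0$ for all $t\in[0,r)$. *)

theory Defs
  imports "HOL-Analysis.Analysis"
begin

end

theory Submission
  imports Defs
begin

theorem mainTheorem3:
  fixes f :: "real \<Rightarrow> real" and A :: "real \<Rightarrow> real" and \<tau> :: "real \<Rightarrow> real"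
    and r \<tau>0 :: real
  assumes f_lip: "\<exists>L. L-lipschitz_on UNIV f"
    and f_diff: "\<And>x. f differentiable (at x)"
    and f_C1: "continuous_on UNIV (deriv f)"
    and f_pos: "\<And>x. f x > 0"
    and f_dec: "\<And>x. deriv f x \<le> 0"
    and f_lim: "(f \<longlongrightarrow> 0) at_top"
    and r_pos: "r > 0"
    and A_cont: "continuous_on {..<r} A"
    and tau_nonneg: "\<And>t. t \<in> {0..<r} \<Longrightarrow> \<tau> t \<ge> 0"
    and tau_C1: "continuous_on {0..<r} (\<lambda>t. 1 - f (A t) / f (A (t - \<tau> t)))"
    and tau_ode: "\<And>t. t \<in> {0..<r} \<Longrightarrow>
        (\<tau> has_real_derivative (1 - f (A t) / f (A (t - \<tau> t)))) (at t within {0..<r})"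
    and tau_init: "\<tau> 0 = \<tau>0" and tau0_nonneg: "\<tau>0 \<ge> 0"
  shows "(\<tau>0 > 0 \<longrightarrow> (\<forall>t\<in>{0..<r}. \<tau> t > 0)) \<and>
         (\<tau>0 = 0 \<longrightarrow> (\<forall>t\<in>{0..<r}. \<tau> t = 0))"
proof -
  define F where "F x = f (A x)" for x
  define \<phi> where "\<phi> t = t - \<tau> t" for t
  have Fpos: "F x > 0" for x using f_pos by (simp add: F_def)
  have fcont: "continuous_on UNIV f"
    using f_diff by (meson continuous_at_imp_continuous_on differentiable_imp_continuous_within)
  have key: "\<tau> b = 0 \<longleftrightarrow> \<tau>0 = 0" if b: "b \<in> {0..<r}" for b
  proof -
    have tcont: "continuous_on {0..b} \<tau>"
    proof -
      have "continuous_on {0..<r} \<tau>"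
        using tau_ode by (meson DERIV_continuous continuous_on_eq_continuous_within)
      then show ?thesis by (rule continuous_on_subset) (use b in auto)
    qed
    have "compact (\<phi> ` {0..b})"
      by (rule compact_continuous_image) (auto simp: \<phi>_def intro!: continuous_intros tcont)
    then obtain B where B: "\<And>x. x \<in> {0..b} \<Longrightarrow> \<bar>\<phi> x\<bar> \<le> B"
      by (meson bounded_real compact_imp_bounded image_eqI)
    define a where "a = - B - 1"
    define b' where "b' = (b + r) / 2"
    have bb': "b < b'" "b' < r" using b by (auto simp: b'_def)
    have Fcont: "continuous_on {a..b'} F"
      unfolding F_def
      by (rule continuous_on_compose2[OF fcont continuous_on_subset[OF A_cont]]) (use bb' in auto)
    define G where "G x = integral {a..x} F" for x
    have Gder: "(G has_real_derivative F x) (at x)" if "a < x" "x < b'" for x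
    proof -
      have "(G has_real_derivative F x) (at x within {a..b'})"
        unfolding G_def by (rule integral_has_real_derivative[OF Fcont]) (use that in auto)
      moreover have "x \<in> interior {a..b'}" using that by simp
      ultimately show ?thesis by (metis at_within_interior)
    qed
    have Ginc: "G x < G y" if "a < x" "x < y" "y < b'" for x y
    proof (rule DERIV_pos_imp_increasing[OF that(2)])
      fix z assume "x \<le> z" "z \<le> y"
      then have "(G has_real_derivative F z) (at z)" using that by (intro Gder) auto
      then show "\<exists>d. (G has_real_derivative d) (at z) \<and> d > 0" using Fpos by blast
    qed
    have phi_in: "a < \<phi> t \<and> \<phi> t < b'" if "t \<in> {0..b}" for t
      using B[OF that] tau_nonneg[of t] that bb' b by (auto simp: a_def \<phi>_def)
    have "\<exists>c. \<forall>t\<in>{0..b}. G (\<phi> t) - G t = c"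
    proof (rule has_field_derivative_zero_constant)
      fix t assume t: "t \<in> {0..b}"
      have tr: "t \<in> {0..<r}" using t b by auto
      have d1: "(\<phi> has_real_derivative F t / F (\<phi> t)) (at t within {0..b})"
      proof -
        have "(\<phi> has_real_derivative 1 - (1 - f (A t) / f (A (t - \<tau> t)))) (at t within {0..<r})"
          unfolding \<phi>_def by (intro derivative_intros tau_ode tr)
        then have "(\<phi> has_real_derivative F t / F (\<phi> t)) (at t within {0..<r})"
          by (simp add: F_def \<phi>_def)
        then show ?thesis
          by (rule has_field_derivative_subset) (use b in auto)
      qed
      have d2: "((\<lambda>t. G (\<phi> t)) has_real_derivative F (\<phi> t) * (F t / F (\<phi> t))) (at t within {0..b})"
        using phi_in[OF t] by (intro DERIV_chain2[OF Gder d1]) auto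
      have d3: "(G has_real_derivative F t) (at t within {0..b})"
      proof -
        have "a < t" using phi_in[OF t] tau_nonneg[OF tr] by (simp add: \<phi>_def)
        moreover have "t < b'" using t bb' by simp
        ultimately show ?thesis by (rule has_field_derivative_at_within[OF Gder])
      qed
      have "((\<lambda>t. G (\<phi> t) - G t) has_real_derivative F (\<phi> t) * (F t / F (\<phi> t)) - F t) (at t within {0..b})"
        by (rule DERIV_diff[OF d2 d3])
      moreover have "F (\<phi> t) * (F t / F (\<phi> t)) - F t = 0" using Fpos[of "\<phi> t"] by simp
      ultimately show "((\<lambda>t. G (\<phi> t) - G t) has_real_derivative 0) (at t within {0..b})" by simp
    qed auto
    then obtain c where c: "\<And>t. t \<in> {0..b} \<Longrightarrow> G (\<phi> t) - G t = c" by blast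
    have b0: "0 \<le> b" using b by auto
    have a0: "a < 0" "a < \<phi> b" "a < b" "0 < b'" using phi_in[of b] phi_in[of 0] b0 bb' tau_nonneg[of 0] tau_nonneg[of b] b r_pos by (auto simp: \<phi>_def)
    have eq: "G (\<phi> b) - G b = G (\<phi> 0) - G 0" using c[of b] c[of 0] b0 by auto
    have phi0: "\<phi> 0 = - \<tau>0" by (simp add: \<phi>_def tau_init)
    have phib: "\<phi> b \<le> b" using tau_nonneg b by (simp add: \<phi>_def)
    show ?thesis
    proof
      assume "\<tau> b = 0"
      then have "G (\<phi> 0) = G 0" using eq by (simp add: \<phi>_def)
      moreover have "\<tau>0 > 0 \<Longrightarrow> G (\<phi> 0) < G 0"
        using Ginc[of "\<phi> 0" 0] phi_in[of 0] phi0 a0 b0 by auto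
      ultimately show "\<tau>0 = 0" using tau0_nonneg by force
    next
      assume "\<tau>0 = 0"
      then have "G (\<phi> b) = G b" using eq phi0 by simp
      moreover have "\<phi> b < b \<Longrightarrow> G (\<phi> b) < G b"
        using Ginc[of "\<phi> b" b] a0 bb' by auto
      ultimately show "\<tau> b = 0" using phib by (force simp: \<phi>_def)
    qed
  qed
  show ?thesis
  proof (intro conjI impI ballI)
    fix t assume "\<tau>0 > 0" "t \<in> {0..<r}"
    then show "\<tau> t > 0" using key[of t] tau_nonneg[of t] by force
  next
    fix t assume "\<tau>0 = 0" "t \<in> {0..<r}"
    then show "\<tau> t = 0" using key[of t] by blast
  qed
qed

end
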